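(* Let $G$ be a finite simple graph with $\nu_0(G)\leq 2$. Then $I(G)^{[k]}$ is linearly related for all $k\geq 2$ (where the zero ideal is regarded as linearly related).
   Context: $G$ is a finite simple graph on vertex set $\{x_1,\ldots,x_n\}$ identified with the variables of $S=K[x_1,\ldots,x_n]$ ($K$ a field); edges are identified with degree-2 monomials. $I(G)^{[k]}$ is generated by all products $e_1\cdots e_k$ over $k$-matchings of $G$. A gap of $G$ is a pair of disjoint edges $e,f$ such that no edge of $G$ joins a vertex of $e$ to a vertex of $f$. A restricted matching of $G$ is a matching $M$ containing an edge $e$ such that $\{e,f\}$ is a gap for every $f\in M\setminus\{e\}$; $\nu_0(G)$ is the maximum size of a restricted matching. A graded ideal $I$ generated in a single degree $d$ is linearly related if $\dim_K\operatorname{Tor}_1^S(I,K)_j=0$ for all $j\neq d+1$. *)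

theory Defs
  imports Main "HOL-Library.Poly_Mapping"
begin

(* Polynomial ring S = K[x_v | v :: 'v] over a field 'k ('v finite):
   polynomials are finitely supported maps from monomials ('v =>0 nat) to 'k,
   with the convolution product of HOL-Library.Poly_Mapping. *)
type_synonym ('v,'k) poly = "('v \<Rightarrow>\<^sub>0 nat) \<Rightarrow>\<^sub>0 'k"

definition var :: "'v \<Rightarrow> ('v,'k::field) poly" where
  "var v = Poly_Mapping.single (Poly_Mapping.single v 1) 1"

definition mdeg :: "('v \<Rightarrow>\<^sub>0 nat) \<Rightarrow> nat" where
  "mdeg m = (\<Sum>v\<in>Poly_Mapping.keys m. Poly_Mapping.lookup m v)"

(* p is homogeneous of degree j (the zero polynomial is homogeneous of every degree) *)
definition homogeneous :: "('v,'k::field) poly \<Rightarrow> nat \<Rightarrow> bool" where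
  "homogeneous p j \<longleftrightarrow> (\<forall>m\<in>Poly_Mapping.keys p. mdeg m = j)"

(* simple graph on vertex set UNIV of the finite type 'v, given by its set of edges,
   each edge a 2-element set of vertices *)
definition simple_graph :: "'v set set \<Rightarrow> bool" where
  "simple_graph E \<longleftrightarrow> (\<forall>e\<in>E. card e = 2)"

definition edge_poly :: "'v set \<Rightarrow> ('v,'k::field) poly" where
  "edge_poly e = (\<Prod>v\<in>e. var v)"

definition matching :: "'v set set \<Rightarrow> 'v set set \<Rightarrow> bool" where
  "matching E M \<longleftrightarrow> M \<subseteq> E \<and> (\<forall>e\<in>M. \<forall>f\<in>M. e \<noteq> f \<longrightarrow> e \<inter> f = {})"

(* minimal monomial generators of I(G)^[k]: products e_1 ... e_k over k-matchings *)
definition sq_free_power_gens :: "'v set set \<Rightarrow> nat \<Rightarrow> ('v,'k::field) poly set" where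
  "sq_free_power_gens E k = {(\<Prod>e\<in>M. edge_poly e) | M. matching E M \<and> card M = k}"

definition gap :: "'v set set \<Rightarrow> 'v set \<Rightarrow> 'v set \<Rightarrow> bool" where
  "gap E e f \<longleftrightarrow> e \<in> E \<and> f \<in> E \<and> e \<inter> f = {} \<and> \<not> (\<exists>a\<in>e. \<exists>b\<in>f. {a, b} \<in> E)"

definition restricted_matching :: "'v set set \<Rightarrow> 'v set set \<Rightarrow> bool" where
  "restricted_matching E M \<longleftrightarrow> matching E M \<and> (\<exists>e\<in>M. \<forall>f\<in>M - {e}. gap E e f)"

(* nu_0(G); 0 if G has no edges (no restricted matching exists) *)
definition nu0 :: "'v set set \<Rightarrow> nat" where
  "nu0 E = Max (insert 0 {card M | M. restricted_matching E M})"

(* For a finite K-linearly independent set Gs of homogeneous degree-d polynomials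
   (a minimal homogeneous generating system of I = (Gs)), the first syzygy module
   Syz = ker(S(-d)^Gs -> I), elements represented as coefficient maps Gs -> S. *)
definition syzygies :: "('v,'k::field) poly set \<Rightarrow> (('v,'k) poly \<Rightarrow> ('v,'k) poly) set" where
  "syzygies Gs = {\<sigma>. (\<forall>g. g \<notin> Gs \<longrightarrow> \<sigma> g = 0) \<and> (\<Sum>g\<in>Gs. \<sigma> g * g) = 0}"

definition linear_syzygies :: "('v,'k::field) poly set \<Rightarrow> (('v,'k) poly \<Rightarrow> ('v,'k) poly) set" where
  "linear_syzygies Gs = {\<sigma> \<in> syzygies Gs. \<forall>g. homogeneous (\<sigma> g) 1}"

(* Tor_1^S(I,K) = Syz / m Syz, so Tor_1^S(I,K)_j = 0 for all j \<noteq> d+1 iff Syz is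
   generated as an S-module by its elements of degree d+1 (the linear syzygies). *)
definition linearly_related :: "('v,'k::field) poly set \<Rightarrow> bool" where
  "linearly_related Gs \<longleftrightarrow>
     (\<forall>\<sigma>\<in>syzygies Gs. \<exists>T c. finite T \<and> T \<subseteq> linear_syzygies Gs \<and>
        \<sigma> = (\<lambda>g. \<Sum>\<tau>\<in>T. c \<tau> * \<tau> g))"

end

theory Submission
  imports Defs
begin


definition KU :: "'v set set \<Rightarrow> nat \<Rightarrow> 'v set set" where
  "KU E k = {\<Union>M | M. matching E M \<and> card M = k}"

definition adjW :: "'v set set \<Rightarrow> nat \<Rightarrow> 'v set \<Rightarrow> 'v set \<Rightarrow> 'v set \<Rightarrow> bool" where
  "adjW E k W A B \<longleftrightarrow> A \<in> KU E k \<and> B \<in> KU E k \<and> A \<subseteq> W \<and> B \<subseteq> W \<and>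
     (\<exists>a b. a \<in> A \<and> b \<notin> A \<and> B = insert b (A - {a}))"

lemma KU_I: "matching E M \<Longrightarrow> card M = k \<Longrightarrow> \<Union>M \<in> KU E k"
  unfolding KU_def by blast

lemma adjW_sym: "adjW E k W A B \<Longrightarrow> adjW E k W B A"
  unfolding adjW_def
  apply (elim conjE exE)
  apply (intro conjI, assumption+)
  apply (rule_tac x=b in exI, rule_tac x=a in exI)
  by auto

lemma edge2: "simple_graph E \<Longrightarrow> e \<in> E \<Longrightarrow> \<exists>a b. a \<noteq> b \<and> e = {a,b}"
  unfolding simple_graph_def by (meson card_2_iff)

lemma edge_other: "simple_graph E \<Longrightarrow> e \<in> E \<Longrightarrow> x \<in> e \<Longrightarrow> \<exists>y. x \<noteq> y \<and> e = {x,y}"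
proof -
  assume a: "simple_graph E" "e \<in> E" "x \<in> e"
  obtain a b where ab: "a \<noteq> b" "e = {a,b}" using edge2[OF a(1,2)] by blast
  show ?thesis
  proof (cases "x = a")
    case True then show ?thesis using ab by blast
  next
    case False then have "x = b" using ab a(3) by blast
    then show ?thesis using ab by (intro exI[of _ a]) auto
  qed
qed

lemma matching_disj: "matching E M \<Longrightarrow> e \<in> M \<Longrightarrow> f \<in> M \<Longrightarrow> e \<noteq> f \<Longrightarrow> e \<inter> f = {}"
  unfolding matching_def by blast

lemma matching_sub: "matching E M \<Longrightarrow> M \<subseteq> E"
  unfolding matching_def by blast

lemma nu0_bound:
  fixes E :: "('v::finite) set set"
  assumes "restricted_matching E R" shows "card R \<le> nu0 E"
proof -
  have "{card M |M. restricted_matching E M} \<subseteq> {..card (UNIV::'v set set)}"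
    by (auto intro: card_mono)
  then have "finite (insert 0 {card M |M. restricted_matching E M})"
    using finite_subset by blast
  then show ?thesis unfolding nu0_def
    by (rule Max_ge) (use assms in blast)
qed

lemma gap_sym: assumes "gap E e f" shows "gap E f e"
proof -
  have "\<forall>a\<in>f. \<forall>b\<in>e. {a,b} \<notin> E"
  proof (intro ballI)
    fix a b assume "a \<in> f" "b \<in> e"
    then have "{b,a} \<notin> E" using assms unfolding gap_def by blast
    then show "{a,b} \<notin> E" by (simp add: insert_commute)
  qed
  then show ?thesis using assms unfolding gap_def by blast
qed

lemma no_three:
  fixes E :: "('v::finite) set set"
  assumes sg: "simple_graph E" and nu: "nu0 E \<le> 2"
    and E: "e \<in> E" "f \<in> E" "h \<in> E"
    and D: "e \<inter> f = {}" "e \<inter> h = {}" "f \<inter> h = {}"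
    and G: "gap E e f" "gap E e h"
  shows False
proof -
  have ne: "e \<noteq> {}" "f \<noteq> {}" "h \<noteq> {}"
    using sg E unfolding simple_graph_def by fastforce+
  have dist: "e \<noteq> f" "e \<noteq> h" "f \<noteq> h" using ne D by auto
  have "restricted_matching E {e,f,h}"
    unfolding restricted_matching_def matching_def
    using E D G dist by (auto simp: Int_commute)
  then have "card {e,f,h} \<le> nu0 E" by (rule nu0_bound)
  moreover have "card {e,f,h} = 3" using dist by auto
  ultimately show False using nu by simp
qed

lemma not_gap: "e \<in> E \<Longrightarrow> h \<in> E \<Longrightarrow> e \<inter> h = {} \<Longrightarrow> \<not> gap E e h \<Longrightarrow> \<exists>p\<in>e. \<exists>q\<in>h. {p,q} \<in> E"
  unfolding gap_def by blast

lemma card_VS: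
  fixes E :: "('v::finite) set set"
  assumes "simple_graph E" "matching E M" shows "card (\<Union>M) = 2 * card M"
proof -
  have "pairwise disjnt M" using assms(2) unfolding matching_def pairwise_def disjnt_def by blast
  then have "card (\<Union>M) = sum card M" by (intro card_Union_disjoint) auto
  also have "\<dots> = sum (\<lambda>_. 2) M"
    using assms unfolding simple_graph_def matching_def by (intro sum.cong) auto
  finally show ?thesis by simp
qed

lemma card_diff_sym: "finite A \<Longrightarrow> finite B \<Longrightarrow> card A = card B \<Longrightarrow> card (A - B) = card (B - A)"
  by (simp add: card_Diff_subset_Int Int_commute)

lemma swap:
  assumes m: "matching E M" and fin: "finite M" and h: "h \<in> M" "h = {a,b}" "a \<noteq> b"
    and g: "g = {b,c}" "g \<in> E" and c: "c \<notin> \<Union>M"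
  shows "matching E (insert g (M - {h}))" "card (insert g (M - {h})) = card M"
    "\<Union>(insert g (M - {h})) = insert c (\<Union>M - {a})"
proof -
  have dis: "\<And>f. f \<in> M \<Longrightarrow> f \<noteq> h \<Longrightarrow> f \<inter> h = {}" using m h matching_disj by blast
  have gM: "g \<notin> M" using c g by blast
  show "matching E (insert g (M - {h}))"
    using m g dis c h unfolding matching_def by blast
  show "card (insert g (M - {h})) = card M"
  proof -
    have "card M > 0" using fin h(1) card_gt_0_iff by blast
    then show ?thesis using gM fin h by (simp add: card.insert_remove)
  qed
  have u: "\<Union>(M - {h}) = \<Union>M - h" using dis h(1) by blast
  show "\<Union>(insert g (M - {h})) = insert c (\<Union>M - {a})"
    unfolding Union_insert u using h g c by auto
qed

lemma swap2:
  assumes m: "matching E M" and fin: "finite M" and eh: "e \<in> M" "h \<in> M" "e \<noteq> h"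
    and g: "g1 \<in> E" "g2 \<in> E" "g1 \<inter> g2 = {}" "g1 \<noteq> {}" "g2 \<noteq> {}"
       "g1 \<subseteq> e \<union> h \<union> Z" "g2 \<subseteq> e \<union> h \<union> Z"
    and Z: "Z \<inter> \<Union>M = {}"
  shows "matching E (insert g1 (insert g2 (M - {e,h})))"
    "card (insert g1 (insert g2 (M - {e,h}))) = card M"
    "\<Union>(insert g1 (insert g2 (M - {e,h}))) = (\<Union>M - (e \<union> h)) \<union> g1 \<union> g2"
proof -
  have dis: "\<And>f f'. f \<in> M \<Longrightarrow> f' \<in> M \<Longrightarrow> f \<noteq> f' \<Longrightarrow> f \<inter> f' = {}" using m matching_disj by blast
  have d1: "\<And>f. f \<in> M - {e,h} \<Longrightarrow> f \<inter> g1 = {}"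
  proof -
    fix f assume f: "f \<in> M - {e,h}"
    have "f \<inter> e = {}" "f \<inter> h = {}" "f \<inter> Z = {}" using dis f eh Z by auto
    then show "f \<inter> g1 = {}" using g by blast
  qed
  have d2: "\<And>f. f \<in> M - {e,h} \<Longrightarrow> f \<inter> g2 = {}"
  proof -
    fix f assume f: "f \<in> M - {e,h}"
    have "f \<inter> e = {}" "f \<inter> h = {}" "f \<inter> Z = {}" using dis f eh Z by auto
    then show "f \<inter> g2 = {}" using g by blast
  qed
  show "matching E (insert g1 (insert g2 (M - {e,h})))"
    using m g d1 d2 unfolding matching_def by (auto simp: Int_commute)
  have n1: "g1 \<notin> M - {e,h}" using d1 g by blast
  have n2: "g2 \<notin> M - {e,h}" using d2 g by blast
  have n12: "g1 \<noteq> g2" using g by blast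
  have "card (M - {e,h}) = card M - 2" using fin eh by (simp add: card_Diff_subset)
  moreover have "card M \<ge> 2" using fin eh
    by (metis card_2_iff card_mono empty_subsetI insert_subset)
  ultimately show "card (insert g1 (insert g2 (M - {e,h}))) = card M"
    using n1 n2 n12 fin by simp
  show "\<Union>(insert g1 (insert g2 (M - {e,h}))) = (\<Union>M - (e \<union> h)) \<union> g1 \<union> g2"
  proof -
    have "\<Union>(M - {e,h}) = \<Union>M - (e \<union> h)" using dis eh by blast
    then show ?thesis by auto
  qed
qed


lemma card_rem_lt: "B = A - {x} \<Longrightarrow> x \<in> A \<Longrightarrow> finite A \<Longrightarrow> card B < card A"
  by (metis card_Diff1_less)

lemma card_sub_rem: "B \<subseteq> A - {x} \<Longrightarrow> x \<in> A \<Longrightarrow> finite A \<Longrightarrow> card B < card A"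
  by (meson card_Diff1_less card_mono finite_Diff le_less_trans)

lemma mu_lt1: "(x::nat) \<le> y \<Longrightarrow> z < w \<Longrightarrow> x*(k+1) + z < y*(k+1) + w"
  by (meson add_le_less_mono mult_le_mono1)

lemma mu_lt2: "(x::nat) < y \<Longrightarrow> z \<le> k \<Longrightarrow> x*(k+1) + z < y*(k+1) + w"
proof -
  assume a: "x < y" "z \<le> k"
  have "(x+1)*(k+1) \<le> y*(k+1)" using a(1) by (intro mult_le_mono1) simp
  then show ?thesis using a(2) by (simp add: algebra_simps)
qed

lemma conn_aux:
  fixes E :: "('v::finite) set set"
  assumes sg: "simple_graph E" and nu: "nu0 E \<le> 2" and k2: "k \<ge> 2"
  shows "card (\<Union>M - \<Union>N) * (k+1) + card (M - N) = n \<Longrightarrow>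
         matching E M \<Longrightarrow> card M = k \<Longrightarrow> matching E N \<Longrightarrow> card N = k \<Longrightarrow>
         \<Union>M \<subseteq> W \<Longrightarrow> \<Union>N \<subseteq> W \<Longrightarrow> (adjW E k W)\<^sup>*\<^sup>* (\<Union>M) (\<Union>N)"
proof (induction n arbitrary: M N rule: less_induct)
  case (less n)
  have mu: "card (\<Union>M - \<Union>N) * (k+1) + card (M - N) = n"
    and mM: "matching E M" and cM: "card M = k" and mN: "matching E N" and cN: "card N = k"
    and WM: "\<Union>M \<subseteq> W" and WN: "\<Union>N \<subseteq> W" using less.prems by auto
  have IH: "\<And>M' N'. card (\<Union>M' - \<Union>N') * (k+1) + card (M' - N') < n \<Longrightarrow>
         matching E M' \<Longrightarrow> card M' = k \<Longrightarrow> matching E N' \<Longrightarrow> card N' = k \<Longrightarrow>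
         \<Union>M' \<subseteq> W \<Longrightarrow> \<Union>N' \<subseteq> W \<Longrightarrow> (adjW E k W)\<^sup>*\<^sup>* (\<Union>M') (\<Union>N')"
    using less.IH by blast
  have finM: "finite M" "finite N" by auto
  have fV: "finite (\<Union>M)" "finite (\<Union>N)" by auto
  have cVk: "\<And>A. matching E A \<Longrightarrow> card A = k \<Longrightarrow> card (\<Union>A) = 2 * k"
    using card_VS[OF sg] by metis
  have cV: "card (\<Union>M) = card (\<Union>N)" using cVk mM cM mN cN by simp
  have KM: "\<Union>M \<in> KU E k" "\<Union>N \<in> KU E k" using mM cM mN cN unfolding KU_def by blast+
  have dsym: "card (\<Union>M - \<Union>N) = card (\<Union>N - \<Union>M)" using card_diff_sym fV cV by blast
  have esym: "card (M - N) = card (N - M)" using card_diff_sym[of M N] finM cM cN by simp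
  have disM: "\<And>f f'. f \<in> M \<Longrightarrow> f' \<in> M \<Longrightarrow> f \<noteq> f' \<Longrightarrow> f \<inter> f' = {}" using mM matching_disj by blast
  have disN: "\<And>f f'. f \<in> N \<Longrightarrow> f' \<in> N \<Longrightarrow> f \<noteq> f' \<Longrightarrow> f \<inter> f' = {}" using mN matching_disj by blast
  have ME: "M \<subseteq> E" "N \<subseteq> E" using mM mN matching_sub by auto
  have symA: "\<And>A B. matching E A \<Longrightarrow> card A = k \<Longrightarrow> matching E B \<Longrightarrow> card B = k \<Longrightarrow>
      card (\<Union>A - \<Union>B) = card (\<Union>B - \<Union>A) \<and> card (A - B) = card (B - A)"
  proof -
    fix A B :: "'v set set" assume "matching E A" "card A = k" "matching E B" "card B = k"
    note h = this
    have "card (\<Union>A) = card (\<Union>B)" using cVk h by simp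
    then have 1: "card (\<Union>A - \<Union>B) = card (\<Union>B - \<Union>A)" by (intro card_diff_sym) auto
    have 2: "card (A - B) = card (B - A)" by (intro card_diff_sym) (auto simp: h)
    show "card (\<Union>A - \<Union>B) = card (\<Union>B - \<Union>A) \<and> card (A - B) = card (B - A)"
      using 1 2 by blast
  qed
  show ?case
  proof (cases "\<Union>M = \<Union>N")
    case True then show ?thesis by simp
  next
    case neq: False
    have "\<Union>M - \<Union>N \<noteq> {}"
    proof
      assume "\<Union>M - \<Union>N = {}"
      then have "\<Union>M \<subseteq> \<Union>N" by blast
      then have "\<Union>M = \<Union>N" using card_subset_eq fV cV by blast
      then show False using neq by simp
    qed
    then obtain a where a: "a \<in> \<Union>M" "a \<notin> \<Union>N" by blast
    then obtain e where e: "e \<in> M" "a \<in> e" by blast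
    obtain a' where a': "a \<noteq> a'" "e = {a,a'}" using edge_other[OF sg _ e(2)] e(1) ME by blast
    have eN: "e \<notin> N" using a e by blast
    show ?thesis
    proof (cases "a' \<in> \<Union>N")
      case True
      then obtain g where g: "g \<in> N" "a' \<in> g" by blast
      obtain c where c: "a' \<noteq> c" "g = {a',c}" using edge_other[OF sg _ g(2)] g(1) ME by blast
      have ge: "g \<noteq> e" using g a e by blast
      have gM: "g \<notin> M" using disM[OF _ e(1) ge] g a' by blast
      have cinN: "c \<in> \<Union>N" using g c by blast
      show ?thesis
      proof (cases "c \<in> \<Union>M")
        case False
        define M' where "M' = insert g (M - {e})"
        have sw: "matching E M'" "card M' = card M" "\<Union>M' = insert c (\<Union>M - {a})"
          using swap[OF mM finM(1) e(1) a'(2) a'(1) c(2) _ False] g(1) ME unfolding M'_def by blast+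
        have "\<Union>M' - \<Union>N \<subseteq> \<Union>M - \<Union>N" unfolding sw(3) using cinN by blast
        then have le: "card (\<Union>M' - \<Union>N) \<le> card (\<Union>M - \<Union>N)" by (simp add: card_mono)
        have "M' - N = (M - N) - {e}" using g(1) unfolding M'_def by auto
        then have lt: "card (M' - N) < card (M - N)" by (rule card_rem_lt) (use e(1) eN in auto)
        have W': "\<Union>M' \<subseteq> W" unfolding sw(3) using WM WN cinN by blast
        have r: "(adjW E k W)\<^sup>*\<^sup>* (\<Union>M') (\<Union>N)"
          by (rule IH[OF _ sw(1) _ mN cN W' WN]) (use mu_lt1[OF le lt, of k] mu sw cM cN in auto)
        have "adjW E k W (\<Union>M) (\<Union>M')"
          unfolding adjW_def
        proof (intro conjI exI)
          show "\<Union>M' \<in> KU E k" using KU_I[OF sw(1)] sw(2) cM by simp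
          show "a \<in> \<Union>M" "c \<notin> \<Union>M" "\<Union>M' = insert c (\<Union>M - {a})" using a False sw(3) by auto
        qed (use KM WM W' in auto)
        then show ?thesis using r by (rule converse_rtranclp_into_rtranclp)
      next
        case True
        define N' where "N' = insert e (N - {g})"
        have sw: "matching E N'" "card N' = card N" "\<Union>N' = insert a (\<Union>N - {c})"
          using swap[OF mN finM(2) g(1), of c a' e a] c a' a(2) ME e(1)
          unfolding N'_def by (auto simp: insert_commute)
        have s2: "card (\<Union>M - \<Union>N') = card (\<Union>N' - \<Union>M) \<and> card (M - N') = card (N' - M)"
          using symA[OF mM cM sw(1)] sw(2) cN by simp
        have "\<Union>N' - \<Union>M \<subseteq> \<Union>N - \<Union>M" unfolding sw(3) using a by blast
        then have le: "card (\<Union>M - \<Union>N') \<le> card (\<Union>M - \<Union>N)" using s2 dsym by (simp add: card_mono)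
        have "N' - M = (N - M) - {g}" using e(1) unfolding N'_def by auto
        then have "card (N' - M) < card (N - M)" by (rule card_rem_lt) (use g(1) gM in auto)
        then have lt: "card (M - N') < card (M - N)" using s2 esym by simp
        have W': "\<Union>N' \<subseteq> W" unfolding sw(3) using WM WN a by blast
        have r: "(adjW E k W)\<^sup>*\<^sup>* (\<Union>M) (\<Union>N')"
          by (rule IH[OF _ mM cM sw(1) _ WM W']) (use mu_lt1[OF le lt, of k] mu sw cN in auto)
        have ca: "c \<noteq> a" using cinN a by blast
        have "adjW E k W (\<Union>N') (\<Union>N)"
          unfolding adjW_def
        proof (intro conjI exI)
          show "\<Union>N' \<in> KU E k" using KU_I[OF sw(1)] sw(2) cN by simp
          show "a \<in> \<Union>N'" "c \<notin> \<Union>N'" unfolding sw(3) using ca by auto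
          show "\<Union>N = insert c (\<Union>N' - {a})" unfolding sw(3) using cinN a by auto
        qed (use KM W' WN in auto)
        then show ?thesis by (rule rtranclp.rtrancl_into_rtrancl[OF r])
      qed
    next
      case False
      have eV: "e \<inter> \<Union>N = {}" using False a a' by blast
      have "\<Union>N - \<Union>M \<noteq> {}" using dsym a
        by (metis Diff_iff card_0_eq card_gt_0_iff empty_iff finite_Diff fV(1))
      then obtain c where c: "c \<in> \<Union>N" "c \<notin> \<Union>M" by blast
      then obtain f where f: "f \<in> N" "c \<in> f" by blast
      obtain c' where c': "c \<noteq> c'" "f = {c,c'}" using edge_other[OF sg _ f(2)] f(1) ME by blast
      have fM: "f \<notin> M" using c f by blast
      show ?thesis
      proof (cases "c' \<in> \<Union>M")
        case True
        then obtain h where h: "h \<in> M" "c' \<in> h" by blast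
        obtain x where x: "c' \<noteq> x" "h = {c',x}" using edge_other[OF sg _ h(2)] h(1) ME by blast
        have hf: "h \<noteq> f" using h f c by blast
        have hN: "h \<notin> N" using disN[OF _ f(1) hf] h c' by blast
        have xM: "x \<in> \<Union>M" using h x by blast
        show ?thesis
        proof (cases "x \<in> \<Union>N")
          case False
          define N' where "N' = insert h (N - {f})"
          have sw: "matching E N'" "card N' = card N" "\<Union>N' = insert x (\<Union>N - {c})"
            using swap[OF mN finM(2) f(1) c'(2) c'(1) x(2) _ False] h(1) ME unfolding N'_def by auto
          have s2: "card (\<Union>M - \<Union>N') = card (\<Union>N' - \<Union>M) \<and> card (M - N') = card (N' - M)"
            using symA[OF mM cM sw(1)] sw(2) cN by simp
          have "\<Union>N' - \<Union>M \<subseteq> \<Union>N - \<Union>M" unfolding sw(3) using xM by blast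
          then have le: "card (\<Union>M - \<Union>N') \<le> card (\<Union>M - \<Union>N)" using s2 dsym by (simp add: card_mono)
          have "N' - M = (N - M) - {f}" using h(1) unfolding N'_def by auto
          then have "card (N' - M) < card (N - M)" by (rule card_rem_lt) (use f(1) fM in auto)
          then have lt: "card (M - N') < card (M - N)" using s2 esym by simp
          have W': "\<Union>N' \<subseteq> W" unfolding sw(3) using WM WN xM by blast
          have r: "(adjW E k W)\<^sup>*\<^sup>* (\<Union>M) (\<Union>N')"
            by (rule IH[OF _ mM cM sw(1) _ WM W']) (use mu_lt1[OF le lt, of k] mu sw cN in auto)
          have cx: "c \<noteq> x" using c xM by blast
          have "adjW E k W (\<Union>N') (\<Union>N)"
            unfolding adjW_def
          proof (intro conjI exI)
            show "\<Union>N' \<in> KU E k" using KU_I[OF sw(1)] sw(2) cN by simp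
            show "x \<in> \<Union>N'" "c \<notin> \<Union>N'" unfolding sw(3) using cx by auto
            show "\<Union>N = insert c (\<Union>N' - {x})" unfolding sw(3) using c False by auto
          qed (use KM W' WN in auto)
          then show ?thesis by (rule rtranclp.rtrancl_into_rtrancl[OF r])
        next
          case True
          define M' where "M' = insert f (M - {h})"
          have sw: "matching E M'" "card M' = card M" "\<Union>M' = insert c (\<Union>M - {x})"
            using swap[OF mM finM(1) h(1), of x c' f c] x c' c(2) ME f(1)
            unfolding M'_def by (auto simp: insert_commute)
          have "\<Union>M' - \<Union>N \<subseteq> \<Union>M - \<Union>N" unfolding sw(3) using c by blast
          then have le: "card (\<Union>M' - \<Union>N) \<le> card (\<Union>M - \<Union>N)" by (simp add: card_mono)
          have "M' - N = (M - N) - {h}" using f(1) unfolding M'_def by auto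
          then have lt: "card (M' - N) < card (M - N)" by (rule card_rem_lt) (use h(1) hN in auto)
          have W': "\<Union>M' \<subseteq> W" unfolding sw(3) using WM WN c by blast
          have r: "(adjW E k W)\<^sup>*\<^sup>* (\<Union>M') (\<Union>N)"
            by (rule IH[OF _ sw(1) _ mN cN W' WN]) (use mu_lt1[OF le lt, of k] mu sw cM cN in auto)
          have "adjW E k W (\<Union>M) (\<Union>M')"
            unfolding adjW_def
          proof (intro conjI exI)
            show "\<Union>M' \<in> KU E k" using KU_I[OF sw(1)] sw(2) cM by simp
            show "x \<in> \<Union>M" "c \<notin> \<Union>M" "\<Union>M' = insert c (\<Union>M - {x})" using xM c sw(3) by auto
          qed (use KM WM W' in auto)
          then show ?thesis using r by (rule converse_rtranclp_into_rtranclp)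
        qed
      next
        case False
        have fV: "f \<inter> \<Union>M = {}" using False c c' by blast
        have eE: "e \<in> E" "f \<in> E" using e(1) f(1) ME by auto
        have ef: "e \<inter> f = {}" using fV e(1) by blast
        have fe: "f \<inter> e = {}" using ef by blast
        show ?thesis
        proof (cases "\<exists>y\<in>e. \<exists>z\<in>f. {y,z} \<in> E")
          case True
          then obtain y z where yz: "y \<in> e" "z \<in> f" "{y,z} \<in> E" by blast
          obtain y' where y': "y \<noteq> y'" "e = {y,y'}" using edge_other[OF sg eE(1) yz(1)] by blast
          have e2: "e = {y',y}" using y' by auto
          have yy: "y' \<noteq> y" using y' by auto
          have zM: "z \<notin> \<Union>M" using fV yz(2) by blast
          define M' where "M' = insert {y,z} (M - {e})"
          have sw: "matching E M'" "card M' = card M" "\<Union>M' = insert z (\<Union>M - {y'})"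
            using swap[OF mM finM(1) e(1) e2 yy refl yz(3) zM] unfolding M'_def by blast+
          have y'N: "y' \<in> \<Union>M - \<Union>N" using y' e(1) eV by blast
          have zN: "z \<in> \<Union>N" using yz(2) f(1) by blast
          have sub: "\<Union>M' - \<Union>N \<subseteq> (\<Union>M - \<Union>N) - {y'}" unfolding sw(3) using zN by blast
          have ltV: "card (\<Union>M' - \<Union>N) < card (\<Union>M - \<Union>N)"
            by (rule card_sub_rem[OF sub y'N]) simp
          have le: "card (M' - N) \<le> k" using sw(2) cM by (metis Diff_subset card_mono finite)
          have W': "\<Union>M' \<subseteq> W" unfolding sw(3) using WM WN zN by blast
          have r: "(adjW E k W)\<^sup>*\<^sup>* (\<Union>M') (\<Union>N)"
            by (rule IH[OF _ sw(1) _ mN cN W' WN]) (use mu_lt2[OF ltV le, of "card (M - N)"] mu sw cM in auto)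
          have "adjW E k W (\<Union>M) (\<Union>M')"
            unfolding adjW_def
          proof (intro conjI exI)
            show "\<Union>M' \<in> KU E k" using KU_I[OF sw(1)] sw(2) cM by simp
            show "y' \<in> \<Union>M" "z \<notin> \<Union>M" "\<Union>M' = insert z (\<Union>M - {y'})" using y'N zM sw(3) by auto
          qed (use KM WM W' in auto)
          then show ?thesis using r by (rule converse_rtranclp_into_rtranclp)
        next
          case False
          have gef: "gap E e f" unfolding gap_def using eE ef False by blast
          have "\<not> M \<subseteq> {e}"
          proof
            assume "M \<subseteq> {e}"
            then have "card M \<le> 1" using card_mono[of "{e}" M] by simp
            then show False using cM k2 by simp
          qed
          then obtain h where h: "h \<in> M" "h \<noteq> e" by blast
          have hE: "h \<in> E" using h ME by blast
          have he: "e \<inter> h = {}" using disM[OF e(1) h(1)] h(2) by blast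
          have fh: "f \<inter> h = {}" using fV h(1) by blast
          have ng1: "\<not> gap E e h" using no_three[OF sg nu eE(1) eE(2) hE ef he fh gef] by blast
          have ng2: "\<not> gap E f h" using no_three[OF sg nu eE(2) eE(1) hE fe fh he gap_sym[OF gef]] by blast
          obtain p q where pq: "p \<in> e" "q \<in> h" "{p,q} \<in> E" using not_gap[OF eE(1) hE he ng1] by blast
          obtain p' q' where pq': "p' \<in> f" "q' \<in> h" "{p',q'} \<in> E" using not_gap[OF eE(2) hE fh ng2] by blast
          obtain y' where y': "p \<noteq> y'" "e = {p,y'}" using edge_other[OF sg eE(1) pq(1)] by blast
          obtain z where z: "q' \<noteq> z" "h = {q',z}" using edge_other[OF sg hE pq'(2)] by blast
          obtain d0 where d0: "p' \<noteq> d0" "f = {p',d0}" using edge_other[OF sg eE(2) pq'(1)] by blast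
          have F: "p \<in> \<Union>M" "y' \<in> \<Union>M" "q' \<in> \<Union>M" "z \<in> \<Union>M" "p' \<notin> \<Union>M" "d0 \<notin> \<Union>M"
            "p' \<in> \<Union>N" "d0 \<in> \<Union>N" "y' \<notin> \<Union>N"
            using e(1) h(1) f(1) y' z d0 fV eV by auto
          have dist: "p \<noteq> q'" "p \<noteq> z" "y' \<noteq> q'" "y' \<noteq> z" using he y' z by auto
          have y'N: "y' \<in> \<Union>M - \<Union>N" using F by blast
          have g2E: "{q',p'} \<in> E" using pq'(3) by (simp add: insert_commute)
          show ?thesis
          proof (cases "q = z")
            case True
            define M2 where "M2 = insert {z,p} (insert {q',p'} (M - {e,h}))"
            have g1E: "{z,p} \<in> E" using pq(3) True by (simp add: insert_commute)
            have i12: "{z,p} \<inter> {q',p'} = {}" using z F dist by auto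
            have s1: "{z,p} \<subseteq> e \<union> h \<union> f" using y' z by auto
            have s2: "{q',p'} \<subseteq> e \<union> h \<union> f" using z pq'(1) by auto
            have sw: "matching E M2" "card M2 = card M" "\<Union>M2 = (\<Union>M - (e \<union> h)) \<union> {z,p} \<union> {q',p'}"
              using swap2[OF mM finM(1) e(1) h(1) h(2)[symmetric] g1E g2E i12 _ _ s1 s2 fV]
              unfolding M2_def by blast+
            have U2: "\<Union>M2 = insert p' (\<Union>M - {y'})"
              unfolding sw(3) y'(2) z(2) using F dist y' z by auto
            have sub: "\<Union>M2 - \<Union>N \<subseteq> (\<Union>M - \<Union>N) - {y'}" unfolding U2 using F by blast
            have ltV: "card (\<Union>M2 - \<Union>N) < card (\<Union>M - \<Union>N)"
              by (rule card_sub_rem[OF sub y'N]) simp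
            have le: "card (M2 - N) \<le> k" using sw(2) cM by (metis Diff_subset card_mono finite)
            have W': "\<Union>M2 \<subseteq> W" unfolding U2 using WM WN F by blast
            have r: "(adjW E k W)\<^sup>*\<^sup>* (\<Union>M2) (\<Union>N)"
              by (rule IH[OF _ sw(1) _ mN cN W' WN]) (use mu_lt2[OF ltV le, of "card (M - N)"] mu sw cM in auto)
            have "adjW E k W (\<Union>M) (\<Union>M2)"
              unfolding adjW_def
            proof (intro conjI exI)
              show "\<Union>M2 \<in> KU E k" using KU_I[OF sw(1)] sw(2) cM by simp
              show "y' \<in> \<Union>M" "p' \<notin> \<Union>M" "\<Union>M2 = insert p' (\<Union>M - {y'})" using F U2 by auto
            qed (use KM WM W' in auto)
            then show ?thesis using r by (rule converse_rtranclp_into_rtranclp)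
          next
            case False
            then have qq: "q = q'" using pq(2) z by auto
            have h2: "h = {z,q'}" using z by auto
            have zq: "z \<noteq> q'" using z by auto
            define M1 where "M1 = insert {q',p'} (M - {h})"
            have sw1: "matching E M1" "card M1 = card M" "\<Union>M1 = insert p' (\<Union>M - {z})"
              using swap[OF mM finM(1) h(1) h2 zq refl g2E F(5)] unfolding M1_def by blast+
            define M2 where "M2 = insert {q',p} (insert f (M - {e,h}))"
            have g1E: "{q',p} \<in> E" using pq(3) qq by (simp add: insert_commute)
            have i12: "{q',p} \<inter> f = {}" using F fV by auto
            have s1: "{q',p} \<subseteq> e \<union> h \<union> f" using y' z by auto
            have s2: "f \<subseteq> e \<union> h \<union> f" by auto
            have sw: "matching E M2" "card M2 = card M" "\<Union>M2 = (\<Union>M - (e \<union> h)) \<union> {q',p} \<union> f"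
              using swap2[OF mM finM(1) e(1) h(1) h(2)[symmetric] g1E eE(2) i12 _ _ s1 s2 fV] d0
              unfolding M2_def by blast+
            have U2: "\<Union>M2 = insert d0 (\<Union>M1 - {y'})"
              unfolding sw(3) sw1(3) y'(2) z(2) d0(2) using F dist y' z d0 by auto
            have sub: "\<Union>M2 - \<Union>N \<subseteq> (\<Union>M - \<Union>N) - {y'}"
              unfolding sw(3) y'(2) z(2) d0(2) using F dist y' z by auto
            have ltV: "card (\<Union>M2 - \<Union>N) < card (\<Union>M - \<Union>N)"
              by (rule card_sub_rem[OF sub y'N]) simp
            have le: "card (M2 - N) \<le> k" using sw(2) cM by (metis Diff_subset card_mono finite)
            have W1: "\<Union>M1 \<subseteq> W" unfolding sw1(3) using WM WN F by blast
            have W': "\<Union>M2 \<subseteq> W" unfolding U2 sw1(3) using WM WN F by blast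
            have r: "(adjW E k W)\<^sup>*\<^sup>* (\<Union>M2) (\<Union>N)"
              by (rule IH[OF _ sw(1) _ mN cN W' WN]) (use mu_lt2[OF ltV le, of "card (M - N)"] mu sw cM in auto)
            have K1: "\<Union>M1 \<in> KU E k" using KU_I[OF sw1(1)] sw1(2) cM by simp
            have "adjW E k W (\<Union>M1) (\<Union>M2)"
              unfolding adjW_def
            proof (intro conjI exI)
              show "\<Union>M2 \<in> KU E k" using KU_I[OF sw(1)] sw(2) cM by simp
              show "y' \<in> \<Union>M1" "d0 \<notin> \<Union>M1" "\<Union>M2 = insert d0 (\<Union>M1 - {y'})"
                using F U2 dist d0 unfolding sw1(3) by auto
            qed (use K1 W1 W' in auto)
            then have r2: "(adjW E k W)\<^sup>*\<^sup>* (\<Union>M1) (\<Union>N)" using r by (rule converse_rtranclp_into_rtranclp)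
            have "adjW E k W (\<Union>M) (\<Union>M1)"
              unfolding adjW_def
            proof (intro conjI exI)
              show "z \<in> \<Union>M" "p' \<notin> \<Union>M" "\<Union>M1 = insert p' (\<Union>M - {z})" using F sw1(3) by auto
            qed (use K1 KM WM W1 in auto)
            then show ?thesis using r2 by (rule converse_rtranclp_into_rtranclp)
          qed
        qed
      qed
    qed
  qed
qed



definition chi :: "'v set \<Rightarrow> ('v \<Rightarrow>\<^sub>0 nat)" where
  "chi U = (\<Sum>v\<in>U. Poly_Mapping.single v 1)"

definition X :: "'v set \<Rightarrow> ('v,'k::field) poly" where
  "X U = Poly_Mapping.single (chi U) 1"

lemma lookup_chi: "finite U \<Longrightarrow> Poly_Mapping.lookup (chi U) v = (if v \<in> U then 1 else 0)"
  unfolding chi_def lookup_sum lookup_single by (simp add: when_def)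

lemma chi_insert: "finite U \<Longrightarrow> v \<notin> U \<Longrightarrow> chi (insert v U) = Poly_Mapping.single v 1 + chi U"
  unfolding chi_def by simp

lemma X_insert: "finite U \<Longrightarrow> v \<notin> U \<Longrightarrow> var v * (X U :: ('v,'k::field) poly) = X (insert v U)"
  unfolding X_def var_def by (simp add: mult_single chi_insert)

lemma X_empty: "(X {} :: ('v,'k::field) poly) = 1"
  unfolding X_def chi_def by simp

lemma prod_var: "finite U \<Longrightarrow> (\<Prod>v\<in>U. var v) = (X U :: ('v,'k::field) poly)"
  by (induction U rule: finite_induct) (simp_all add: X_insert X_empty)

lemma chi_inj:
  fixes A B :: "('v::finite) set"
  assumes "chi A = chi B" shows "A = B"
proof -
  have "\<forall>v. v \<in> A \<longleftrightarrow> v \<in> B"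
  proof
    fix v
    have "Poly_Mapping.lookup (chi A) v = Poly_Mapping.lookup (chi B) v" using assms by simp
    then show "v \<in> A \<longleftrightarrow> v \<in> B" by (simp add: lookup_chi split: if_splits)
  qed
  then show ?thesis by blast
qed

lemma X_inj:
  fixes A B :: "('v::finite) set"
  assumes "(X A :: ('v,'k::field) poly) = X B" shows "A = B"
proof -
  have "Poly_Mapping.lookup (X A :: ('v,'k::field) poly) (chi A) = 1" unfolding X_def by simp
  then have "Poly_Mapping.lookup (X B :: ('v,'k::field) poly) (chi A) = 1" using assms by simp
  then have "chi B = chi A" unfolding X_def lookup_single by (simp add: when_def split: if_splits)
  then show ?thesis using chi_inj by blast
qed

lemma gen_eq:
  fixes E :: "('v::finite) set set"
  assumes "matching E M"
  shows "(\<Prod>e\<in>M. edge_poly e) = (X (\<Union>M) :: ('v,'k::field) poly)"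
proof -
  have "(X (\<Union>M) :: ('v,'k::field) poly) = (\<Prod>v\<in>\<Union>M. var v)" by (simp add: prod_var)
  also have "\<dots> = (\<Prod>e\<in>M. \<Prod>v\<in>e. var v)"
    using assms unfolding matching_def by (subst prod.Union_disjoint) auto
  finally show ?thesis unfolding edge_poly_def by simp
qed

lemma gens_eq:
  fixes E :: "('v::finite) set set"
  shows "(sq_free_power_gens E k :: ('v,'k::field) poly set) = X ` KU E k"
proof (intro equalityI subsetI)
  fix x assume "x \<in> (sq_free_power_gens E k :: ('v,'k::field) poly set)"
  then obtain M where M: "matching E M" "card M = k" "x = (\<Prod>e\<in>M. edge_poly e)"
    unfolding sq_free_power_gens_def by blast
  then have "x = X (\<Union>M)" by (simp add: gen_eq[OF M(1)])
  then show "x \<in> X ` KU E k" using M unfolding KU_def by blast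
next
  fix x assume "x \<in> (X ` KU E k :: ('v,'k::field) poly set)"
  then obtain M where M: "matching E M" "card M = k" "x = X (\<Union>M)"
    unfolding KU_def by blast
  then have "x = (\<Prod>e\<in>M. edge_poly e)" by (simp add: gen_eq[OF M(1)])
  then show "x \<in> sq_free_power_gens E k" using M unfolding sq_free_power_gens_def by blast
qed

definition span_ls :: "('v,'k::field) poly set \<Rightarrow> (('v,'k) poly \<Rightarrow> ('v,'k) poly) \<Rightarrow> bool" where
  "span_ls Gs \<sigma> \<longleftrightarrow> (\<exists>T c. finite T \<and> T \<subseteq> linear_syzygies Gs \<and> \<sigma> = (\<lambda>g. \<Sum>\<tau>\<in>T. c \<tau> * \<tau> g))"

lemma sum_restr: "finite B \<Longrightarrow> A \<subseteq> B \<Longrightarrow> (\<Sum>x\<in>B. if x \<in> A then f x else 0) = sum f A"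
proof -
  assume a: "finite B" "A \<subseteq> B"
  have "B \<inter> A = A" using a by blast
  then show ?thesis using sum.inter_restrict[OF a(1), of f A] by simp
qed

lemma span_zero: "span_ls Gs (\<lambda>g. 0)"
  unfolding span_ls_def by (rule exI[of _ "{}"]) simp

lemma span_gen: "\<tau> \<in> linear_syzygies Gs \<Longrightarrow> span_ls Gs \<tau>"
  unfolding span_ls_def by (rule exI[of _ "{\<tau>}"], rule exI[of _ "\<lambda>_. 1"]) auto

lemma span_add:
  assumes "span_ls Gs \<sigma>1" "span_ls Gs \<sigma>2" shows "span_ls Gs (\<lambda>g. \<sigma>1 g + \<sigma>2 g)"
proof -
  obtain T1 c1 where 1: "finite T1" "T1 \<subseteq> linear_syzygies Gs" "\<sigma>1 = (\<lambda>g. \<Sum>\<tau>\<in>T1. c1 \<tau> * \<tau> g)"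
    using assms(1) unfolding span_ls_def by blast
  obtain T2 c2 where 2: "finite T2" "T2 \<subseteq> linear_syzygies Gs" "\<sigma>2 = (\<lambda>g. \<Sum>\<tau>\<in>T2. c2 \<tau> * \<tau> g)"
    using assms(2) unfolding span_ls_def by blast
  define c where "c \<tau> = (if \<tau> \<in> T1 then c1 \<tau> else 0) + (if \<tau> \<in> T2 then c2 \<tau> else 0)" for \<tau>
  have "(\<lambda>g. \<sigma>1 g + \<sigma>2 g) = (\<lambda>g. \<Sum>\<tau>\<in>T1 \<union> T2. c \<tau> * \<tau> g)"
  proof
    fix g
    have pt: "c \<tau> * \<tau> g = (if \<tau> \<in> T1 then c1 \<tau> * \<tau> g else 0) + (if \<tau> \<in> T2 then c2 \<tau> * \<tau> g else 0)" for \<tau>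
      unfolding c_def by (simp add: distrib_right)
    have "(\<Sum>\<tau>\<in>T1 \<union> T2. c \<tau> * \<tau> g) =
        (\<Sum>\<tau>\<in>T1 \<union> T2. (if \<tau> \<in> T1 then c1 \<tau> * \<tau> g else 0)) + (\<Sum>\<tau>\<in>T1 \<union> T2. (if \<tau> \<in> T2 then c2 \<tau> * \<tau> g else 0))"
      unfolding pt by (rule sum.distrib)
    also have "\<dots> = (\<Sum>\<tau>\<in>T1. c1 \<tau> * \<tau> g) + (\<Sum>\<tau>\<in>T2. c2 \<tau> * \<tau> g)"
      using 1(1) 2(1) by (simp add: sum_restr)
    finally show "\<sigma>1 g + \<sigma>2 g = (\<Sum>\<tau>\<in>T1 \<union> T2. c \<tau> * \<tau> g)" using 1(3) 2(3) by simp
  qed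
  then show ?thesis unfolding span_ls_def using 1 2 by blast
qed

lemma span_smult:
  assumes "span_ls Gs \<sigma>" shows "span_ls Gs (\<lambda>g. p * \<sigma> g)"
proof -
  obtain T c where 1: "finite T" "T \<subseteq> linear_syzygies Gs" "\<sigma> = (\<lambda>g. \<Sum>\<tau>\<in>T. c \<tau> * \<tau> g)"
    using assms(1) unfolding span_ls_def by blast
  have e: "(\<lambda>g. p * \<sigma> g) = (\<lambda>g. \<Sum>\<tau>\<in>T. (p * c \<tau>) * \<tau> g)"
    unfolding 1(3) by (simp add: sum_distrib_left mult.assoc)
  show ?thesis unfolding span_ls_def
    by (rule exI[of _ T], rule exI[of _ "\<lambda>\<tau>. p * c \<tau>"]) (use 1(1,2) e in blast)
qed

lemma span_sum:
  assumes "finite I" "\<And>i. i \<in> I \<Longrightarrow> span_ls Gs (f i)"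
  shows "span_ls Gs (\<lambda>g. \<Sum>i\<in>I. f i g)"
  using assms
proof (induction I rule: finite_induct)
  case empty then show ?case by (simp add: span_zero)
next
  case (insert i I)
  then have "span_ls Gs (\<lambda>g. f i g + (\<Sum>i\<in>I. f i g))" by (intro span_add) auto
  then show ?case using insert by simp
qed

lemma span_diff:
  assumes "span_ls Gs \<sigma>1" "span_ls Gs \<sigma>2" shows "span_ls Gs (\<lambda>g. \<sigma>1 g - \<sigma>2 g)"
proof -
  have "span_ls Gs (\<lambda>g. (- 1) * \<sigma>2 g)" by (rule span_smult[OF assms(2)])
  then have "span_ls Gs (\<lambda>g. \<sigma>1 g + (- 1) * \<sigma>2 g)" by (rule span_add[OF assms(1)])
  then show ?thesis by simp
qed


definition tau :: "'v set \<Rightarrow> 'v set \<Rightarrow> 'v \<Rightarrow> 'v \<Rightarrow> ('v,'k::field) poly \<Rightarrow> ('v,'k) poly" where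
  "tau A B a b = (\<lambda>g. if g = X A then var b else if g = X B then - var a else 0)"

lemma hom_var: "homogeneous (var v :: ('v,'k::field) poly) 1"
  unfolding homogeneous_def var_def mdeg_def by simp

lemma hom_neg: "homogeneous p j \<Longrightarrow> homogeneous (-p) j"
  unfolding homogeneous_def by simp

lemma hom_zero: "homogeneous 0 j"
  unfolding homogeneous_def by simp

lemma tau_lin:
  fixes E :: "('v::finite) set set"
  assumes A: "A \<in> KU E k" "B \<in> KU E k" and ab: "a \<in> A" "b \<notin> A" "B = insert b (A - {a})"
  shows "(tau A B a b :: ('v,'k::field) poly \<Rightarrow> _) \<in> linear_syzygies (X ` KU E k)"
proof -
  have AB: "A \<noteq> B" using ab by blast
  have XAB: "(X A :: ('v,'k) poly) \<noteq> X B" using X_inj AB by blast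
  have ins: "insert b A = insert a B" using ab by blast
  have aB: "a \<notin> B" using ab by blast
  let ?G = "X ` KU E k :: ('v,'k) poly set"
  have fin: "finite ?G" by simp
  have mem: "X A \<in> ?G" "X B \<in> ?G" using A by auto
  have "(\<Sum>g\<in>?G. tau A B a b g * g) = (\<Sum>g\<in>?G. (if g = X A then var b * X A else 0) + (if g = X B then - (var a * X B) else 0))"
    by (rule sum.cong) (auto simp: tau_def XAB)
  also have "\<dots> = var b * X A - var a * X B" using mem fin by (simp add: sum.distrib)
  also have "\<dots> = 0" by (simp add: X_insert ab(2) aB ins)
  finally have syz: "(\<Sum>g\<in>?G. tau A B a b g * g) = 0" .
  have z: "\<forall>g. g \<notin> ?G \<longrightarrow> tau A B a b g = 0" using mem unfolding tau_def by auto
  have h: "\<forall>g. homogeneous (tau A B a b g) 1"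
    unfolding tau_def using hom_var[of b] hom_neg[OF hom_var[of a]] hom_zero by auto
  show ?thesis unfolding linear_syzygies_def syzygies_def using syz z h by blast
qed

lemma shift:
  fixes m :: "'v \<Rightarrow>\<^sub>0 nat"
  assumes "finite S" "b \<notin> S" "insert b S \<subseteq> Poly_Mapping.keys m"
  shows "m - chi (insert b S) + Poly_Mapping.single b 1 = m - chi S"
proof (rule poly_mapping_eqI)
  fix v
  have mb: "Poly_Mapping.lookup m b \<ge> 1" using assms(3) by (simp add: in_keys_iff Suc_le_eq)
  show "Poly_Mapping.lookup (m - chi (insert b S) + Poly_Mapping.single b 1) v = Poly_Mapping.lookup (m - chi S) v"
    using assms mb by (cases "v = b") (auto simp: lookup_add lookup_minus lookup_chi lookup_single when_def)
qed

definition F :: "'v set \<Rightarrow> ('v \<Rightarrow>\<^sub>0 nat) \<Rightarrow> ('v,'k::field) poly \<Rightarrow> ('v,'k) poly" where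
  "F U m = (\<lambda>h. if h = X U then Poly_Mapping.single (m - chi U) 1 else 0)"

lemma stepF:
  fixes E :: "('v::finite) set set"
  assumes "adjW E k (Poly_Mapping.keys m) A B"
  shows "span_ls (X ` KU E k) (\<lambda>h. (F A m h :: ('v,'k::field) poly) - F B m h)"
proof -
  obtain a b where K: "A \<in> KU E k" "B \<in> KU E k" "A \<subseteq> Poly_Mapping.keys m" "B \<subseteq> Poly_Mapping.keys m"
    and ab: "a \<in> A" "b \<notin> A" "B = insert b (A - {a})"
    using assms unfolding adjW_def by blast
  have AB: "A \<noteq> B" using ab by blast
  have XAB: "(X A :: ('v,'k) poly) \<noteq> X B" using X_inj AB by blast
  have ins: "insert b A = insert a B" using ab by blast
  have aB: "a \<notin> B" using ab by blast
  have s1: "m - chi (insert b A) + Poly_Mapping.single b 1 = m - chi A"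
    by (rule shift) (use K ab in auto)
  have s2: "m - chi (insert a B) + Poly_Mapping.single a 1 = m - chi B"
    by (rule shift) (use K ab aB in auto)
  have eq: "(\<lambda>h. (F A m h :: ('v,'k::field) poly) - F B m h) =
     (\<lambda>h. Poly_Mapping.single (m - chi (insert b A)) 1 * tau A B a b h)"
  proof
    fix h :: "('v,'k) poly"
    show "F A m h - F B m h = Poly_Mapping.single (m - chi (insert b A)) 1 * tau A B a b h"
    proof (cases "h = X A")
      case True
      then show ?thesis using XAB s1 unfolding F_def tau_def var_def by (simp add: mult_single)
    next
      case False
      then show ?thesis using XAB s2 ins unfolding F_def tau_def var_def
        by (simp add: mult_single single_uminus)
    qed
  qed
  show ?thesis unfolding eq
    by (rule span_smult, rule span_gen, rule tau_lin[OF K(1,2) ab])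
qed

lemma pathF:
  fixes E :: "('v::finite) set set"
  assumes "(adjW E k (Poly_Mapping.keys m))\<^sup>*\<^sup>* A B"
  shows "span_ls (X ` KU E k) (\<lambda>h. (F A m h :: ('v,'k::field) poly) - F B m h)"
  using assms
proof (induction rule: rtranclp_induct)
  case base then show ?case using span_zero by simp
next
  case (step y z)
  have "span_ls (X ` KU E k) (\<lambda>h. ((F A m h :: ('v,'k::field) poly) - F y m h) + (F y m h - F z m h))"
    by (rule span_add[OF step.IH stepF[OF step.hyps(2)]])
  then show ?case by simp
qed


lemma conn:
  fixes E :: "('v::finite) set set"
  assumes sg: "simple_graph E" and nu: "nu0 E \<le> 2" and k2: "k \<ge> 2"
    and A: "A \<in> KU E k" "B \<in> KU E k" "A \<subseteq> W" "B \<subseteq> W"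
  shows "(adjW E k W)\<^sup>*\<^sup>* A B"
proof -
  obtain M where M: "matching E M" "card M = k" "A = \<Union>M" using A(1) unfolding KU_def by blast
  obtain N where N: "matching E N" "card N = k" "B = \<Union>N" using A(2) unfolding KU_def by blast
  show ?thesis using conn_aux[OF sg nu k2 refl M(1,2) N(1,2)] A(3,4) M(3) N(3) by simp
qed

lemma poly_expand:
  fixes p :: "'a \<Rightarrow>\<^sub>0 'b::comm_monoid_add"
  shows "p = (\<Sum>\<alpha>\<in>Poly_Mapping.keys p. Poly_Mapping.single \<alpha> (Poly_Mapping.lookup p \<alpha>))"
proof (rule poly_mapping_eqI)
  fix \<beta>
  have "Poly_Mapping.lookup (\<Sum>\<alpha>\<in>Poly_Mapping.keys p. Poly_Mapping.single \<alpha> (Poly_Mapping.lookup p \<alpha>)) \<beta>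
      = (\<Sum>\<alpha>\<in>Poly_Mapping.keys p. if \<alpha> = \<beta> then Poly_Mapping.lookup p \<alpha> else 0)"
    by (simp add: lookup_sum lookup_single when_def)
  also have "\<dots> = Poly_Mapping.lookup p \<beta>"
    by (simp add: in_keys_iff)
  finally show "Poly_Mapping.lookup p \<beta> = Poly_Mapping.lookup (\<Sum>\<alpha>\<in>Poly_Mapping.keys p. Poly_Mapping.single \<alpha> (Poly_Mapping.lookup p \<alpha>)) \<beta>"
    by simp
qed

lemma single_sum: "Poly_Mapping.single k (sum f A) = (\<Sum>x\<in>A. Poly_Mapping.single k (f x))"
  by (induction A rule: infinite_finite_induct) (simp_all add: single_add)

lemma sum_Sigma': "finite A \<Longrightarrow> \<forall>x\<in>A. finite (B x) \<Longrightarrow>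
    (\<Sum>p\<in>Sigma A B. f p) = (\<Sum>x\<in>A. \<Sum>y\<in>B x. f (x,y))"
  using sum.Sigma[of A B "\<lambda>x y. f (x,y)"] by simp

theorem theorem3p2:
  fixes E :: "('v::finite) set set" and k :: nat
  assumes "simple_graph E"
    and "nu0 E \<le> 2"
    and "k \<ge> 2"
  shows "linearly_related (sq_free_power_gens E k :: ('v, 'k::field) poly set)"
proof -
  let ?U = "KU E k"
  let ?G = "X ` ?U :: ('v,'k) poly set"
  have G: "(sq_free_power_gens E k :: ('v, 'k::field) poly set) = ?G" by (rule gens_eq)
  have injX: "inj_on (X :: 'v set \<Rightarrow> ('v,'k) poly) ?U" using X_inj by (meson inj_onI)
  show ?thesis unfolding linearly_related_def G
  proof
    fix \<sigma> assume \<sigma>: "\<sigma> \<in> syzygies ?G"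
    have \<sigma>0: "\<And>g. g \<notin> ?G \<Longrightarrow> \<sigma> g = 0" and \<sigma>s: "(\<Sum>g\<in>?G. \<sigma> g * g) = 0"
      using \<sigma> unfolding syzygies_def by auto
    define c where "c p = Poly_Mapping.lookup (\<sigma> (X (fst p))) (snd p)" for p :: "'v set \<times> ('v \<Rightarrow>\<^sub>0 nat)"
    define P where "P = Sigma ?U (\<lambda>U. Poly_Mapping.keys (\<sigma> (X U)))"
    define mf where "mf p = snd p + chi (fst p)" for p :: "'v set \<times> ('v \<Rightarrow>\<^sub>0 nat)"
    define B where "B m = (SOME U. U \<in> ?U \<and> U \<subseteq> Poly_Mapping.keys m)" for m :: "'v \<Rightarrow>\<^sub>0 nat"
    have finU: "finite ?U" by simp
    have finP: "finite P" unfolding P_def by (intro finite_SigmaI) auto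
    have subk: "fst p \<in> ?U \<and> fst p \<subseteq> Poly_Mapping.keys (mf p)" if "p \<in> P" for p
    proof -
      have "v \<in> Poly_Mapping.keys (mf p)" if "v \<in> fst p" for v
        using that unfolding mf_def by (simp add: in_keys_iff lookup_add lookup_chi)
      then show ?thesis using \<open>p \<in> P\<close> unfolding P_def by auto
    qed
    have Bp: "B (mf p) \<in> ?U \<and> B (mf p) \<subseteq> Poly_Mapping.keys (mf p)" if "p \<in> P" for p
      unfolding B_def by (rule someI[of _ "fst p"]) (use subk[OF that] in blast)
    have C1: "\<sigma> h = (\<Sum>p\<in>P. Poly_Mapping.single 0 (c p) * F (fst p) (mf p) h)" for h
    proof (cases "h \<in> ?G")
      case False
      have "F (fst p) (mf p) h = 0" if "p \<in> P" for p
        using False subk[OF that] unfolding F_def by auto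
      then show ?thesis using \<sigma>0[OF False] by simp
    next
      case True
      then obtain U0 where U0: "U0 \<in> ?U" "h = X U0" by blast
      have "(\<Sum>p\<in>P. Poly_Mapping.single 0 (c p) * F (fst p) (mf p) h)
          = (\<Sum>U\<in>?U. \<Sum>\<alpha>\<in>Poly_Mapping.keys (\<sigma> (X U)). Poly_Mapping.single 0 (c (U,\<alpha>)) * F U (mf (U,\<alpha>)) h)"
        unfolding P_def by (subst sum_Sigma') auto
      also have "\<dots> = (\<Sum>U\<in>?U. if U0 = U then (\<Sum>\<alpha>\<in>Poly_Mapping.keys (\<sigma> (X U)). Poly_Mapping.single \<alpha> (c (U,\<alpha>))) else 0)"
      proof (rule sum.cong[OF refl])
        fix U assume U: "U \<in> ?U"
        have XU: "(X U0 = (X U :: ('v,'k) poly)) = (U0 = U)" using X_inj by blast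
        show "(\<Sum>\<alpha>\<in>Poly_Mapping.keys (\<sigma> (X U)). Poly_Mapping.single 0 (c (U,\<alpha>)) * F U (mf (U,\<alpha>)) h)
           = (if U0 = U then (\<Sum>\<alpha>\<in>Poly_Mapping.keys (\<sigma> (X U)). Poly_Mapping.single \<alpha> (c (U,\<alpha>))) else 0)"
          unfolding F_def mf_def U0(2) XU by (simp add: mult_single)
      qed
      also have "\<dots> = (\<Sum>\<alpha>\<in>Poly_Mapping.keys (\<sigma> (X U0)). Poly_Mapping.single \<alpha> (c (U0,\<alpha>)))"
        using U0(1) finU by simp
      also have "\<dots> = \<sigma> h" unfolding c_def U0(2) by (simp flip: poly_expand)
      finally show ?thesis by simp
    qed
    have FZ: "(\<Sum>p\<in>{p\<in>P. mf p = m}. c p) = 0" for m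
    proof -
      have "(\<Sum>U\<in>?U. \<sigma> (X U) * X U) = 0" using \<sigma>s by (simp add: sum.reindex[OF injX])
      moreover have "\<sigma> (X U) * X U = (\<Sum>\<alpha>\<in>Poly_Mapping.keys (\<sigma> (X U)). Poly_Mapping.single (mf (U,\<alpha>)) (c (U,\<alpha>)))" for U
      proof -
        have "\<sigma> (X U) * X U = (\<Sum>\<alpha>\<in>Poly_Mapping.keys (\<sigma> (X U)). Poly_Mapping.single \<alpha> (c (U,\<alpha>))) * X U"
          unfolding c_def by (simp flip: poly_expand)
        also have "\<dots> = (\<Sum>\<alpha>\<in>Poly_Mapping.keys (\<sigma> (X U)). Poly_Mapping.single (mf (U,\<alpha>)) (c (U,\<alpha>)))"
          unfolding X_def mf_def by (simp add: sum_distrib_right mult_single)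
        finally show ?thesis .
      qed
      ultimately have "(\<Sum>U\<in>?U. \<Sum>\<alpha>\<in>Poly_Mapping.keys (\<sigma> (X U)). Poly_Mapping.single (mf (U,\<alpha>)) (c (U,\<alpha>))) = 0"
        by simp
      then have "(\<Sum>p\<in>P. Poly_Mapping.single (mf p) (c p)) = 0"
        unfolding P_def by (subst sum_Sigma') auto
      then have "Poly_Mapping.lookup (\<Sum>p\<in>P. Poly_Mapping.single (mf p) (c p)) m = 0" by simp
      then have "(\<Sum>p\<in>P. if mf p = m then c p else 0) = 0"
        by (simp add: lookup_sum lookup_single when_def)
      then show ?thesis using finP by (simp add: sum.inter_filter)
    qed
    have C3: "(\<Sum>p\<in>P. Poly_Mapping.single 0 (c p) * F (B (mf p)) (mf p) h) = 0" for h
    proof -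
      have "(\<Sum>p\<in>P. Poly_Mapping.single 0 (c p) * F (B (mf p)) (mf p) h)
         = (\<Sum>m\<in>mf ` P. \<Sum>p\<in>{p. p \<in> P \<and> mf p = m}. Poly_Mapping.single 0 (c p) * F (B (mf p)) (mf p) h)"
        by (rule sum.image_gen[OF finP])
      also have "\<dots> = (\<Sum>m\<in>mf ` P. \<Sum>p\<in>{p. p \<in> P \<and> mf p = m}. Poly_Mapping.single 0 (c p) * F (B m) m h)"
        by (intro sum.cong refl) auto
      also have "\<dots> = (\<Sum>m\<in>mf ` P. Poly_Mapping.single 0 (\<Sum>p\<in>{p. p \<in> P \<and> mf p = m}. c p) * F (B m) m h)"
        by (simp add: sum_distrib_right single_sum)
      also have "\<dots> = 0" using FZ by simp
      finally show ?thesis .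
    qed
    have C2: "span_ls ?G (\<lambda>h. \<Sum>p\<in>P. Poly_Mapping.single 0 (c p) * (F (fst p) (mf p) h - F (B (mf p)) (mf p) h))"
    proof (rule span_sum[OF finP])
      fix p assume p: "p \<in> P"
      have "(adjW E k (Poly_Mapping.keys (mf p)))\<^sup>*\<^sup>* (fst p) (B (mf p))"
        using conn[OF assms] subk[OF p] Bp[OF p] by blast
      then have "span_ls ?G (\<lambda>h. F (fst p) (mf p) h - F (B (mf p)) (mf p) h)" by (rule pathF)
      then show "span_ls ?G (\<lambda>h. Poly_Mapping.single 0 (c p) * (F (fst p) (mf p) h - F (B (mf p)) (mf p) h))"
        by (rule span_smult)
    qed
    have "\<sigma> = (\<lambda>h. \<Sum>p\<in>P. Poly_Mapping.single 0 (c p) * (F (fst p) (mf p) h - F (B (mf p)) (mf p) h))"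
    proof
      fix h
      have "(\<Sum>p\<in>P. Poly_Mapping.single 0 (c p) * (F (fst p) (mf p) h - F (B (mf p)) (mf p) h))
         = (\<Sum>p\<in>P. Poly_Mapping.single 0 (c p) * F (fst p) (mf p) h) - (\<Sum>p\<in>P. Poly_Mapping.single 0 (c p) * F (B (mf p)) (mf p) h)"
        by (simp add: right_diff_distrib sum_subtractf)
      then show "\<sigma> h = (\<Sum>p\<in>P. Poly_Mapping.single 0 (c p) * (F (fst p) (mf p) h - F (B (mf p)) (mf p) h))"
        using C1[of h] C3[of h] by simp
    qed
    then have "span_ls ?G \<sigma>" using C2 by simp
    then show "\<exists>T c. finite T \<and> T \<subseteq> linear_syzygies ?G \<and> \<sigma> = (\<lambda>g. \<Sum>\<tau>\<in>T. c \<tau> * \<tau> g)"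
      unfolding span_ls_def by blast
  qed
qed

end
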